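(* Let $\alpha>0$, $N\ge1$, $r\ge1$, and let $(\mathbf A^k_n)$ and $(\mathbf B^k_n)$, $k\in[r]$, $n\in[N]$, be tuples of matrices with $\mathbf A^k_n,\mathbf B^k_n\in\mathbb R^{m_n\times p_n}$ and $\|\mathbf A^k_n\|_F=\|\mathbf B^k_n\|_F=\alpha$ for all $k,n$. If $\sqrt{\sum_{k=1}^r\sum_{n=1}^N\|\mathbf A^k_n-\mathbf B^k_n\|_F^2}\le\epsilon$, then $$\Big\|\sum_{k=1}^r\mathbf A^k_1\otimes\cdots\otimes\mathbf A^k_N-\sum_{k=1}^r\mathbf B^k_1\otimes\cdots\otimes\mathbf B^k_N\Big\|_F\le\alpha^{N-1}\sqrt{Nr}\,\epsilon.$$
   Context: $\otimes$ is the Kronecker product and $\|\cdot\|_F$ the Frobenius norm. *)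

theory Defs
  imports "Jordan_Normal_Form.Matrix"
begin

definition kron :: "'a :: times mat \<Rightarrow> 'a mat \<Rightarrow> 'a mat" where
  "kron A B = mat (dim_row A * dim_row B) (dim_col A * dim_col B)
     (\<lambda>(i, j). A $$ (i div dim_row B, j div dim_col B) * B $$ (i mod dim_row B, j mod dim_col B))"

fun kronN :: "(nat \<Rightarrow> 'a :: {times, zero, one} mat) \<Rightarrow> nat \<Rightarrow> 'a mat" where
  "kronN f 0 = 1\<^sub>m 1"
| "kronN f (Suc n) = kron (kronN f n) (f n)"

definition msum :: "nat \<Rightarrow> nat \<Rightarrow> (nat \<Rightarrow> 'a :: comm_monoid_add mat) \<Rightarrow> nat \<Rightarrow> 'a mat" where
  "msum d1 d2 f K = mat d1 d2 (\<lambda>ij. \<Sum>k<K. f k $$ ij)"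

definition frob :: "real mat \<Rightarrow> real" where
  "frob A = sqrt (\<Sum>i<dim_row A. \<Sum>j<dim_col A. (A $$ (i, j))\<^sup>2)"

end

theory Submission
  imports Defs "HOL-Analysis.L2_Norm"
begin

lemma sum_divmod:
  fixes g :: "nat \<Rightarrow> nat \<Rightarrow> real"
  shows "(\<Sum>i<a*b. g (i div b) (i mod b)) = (\<Sum>i1<a. \<Sum>i2<b. g i1 i2)"
proof -
  have "(\<Sum>i<a*b. g (i div b) (i mod b)) = (\<Sum>i1<a. \<Sum>i\<in>{i1*b..<i1*b+b}. g (i div b) (i mod b))"
    by (rule sum.nat_group[symmetric])
  also have "\<dots> = (\<Sum>i1<a. \<Sum>i2<b. g i1 i2)"
  proof (rule sum.cong[OF refl])
    fix i1 assume "i1 \<in> {..<a}"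
    have "(\<Sum>i\<in>{i1*b..<i1*b+b}. g (i div b) (i mod b)) = (\<Sum>t\<in>{0..<b}. g ((i1*b+t) div b) ((i1*b+t) mod b))"
      by (subst sum.atLeastLessThan_shift_0) (simp add: comp_def)
    also have "\<dots> = (\<Sum>t\<in>{0..<b}. g i1 t)"
      by (rule sum.cong) auto
    finally show "(\<Sum>i\<in>{i1*b..<i1*b+b}. g (i div b) (i mod b)) = (\<Sum>i2<b. g i1 i2)"
      by (simp add: atLeast0LessThan)
  qed
  finally show ?thesis .
qed

lemma dim_kron[simp]: "dim_row (kron X Y) = dim_row X * dim_row Y" "dim_col (kron X Y) = dim_col X * dim_col Y"
  by (simp_all add: kron_def)

lemma frob_kron: "frob (kron X Y) = frob X * frob Y"
proof -
  let ?a = "dim_row X" and ?b = "dim_row Y" and ?c = "dim_col X" and ?d = "dim_col Y"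
  have "(\<Sum>i<?a*?b. \<Sum>j<?c*?d. (kron X Y $$ (i,j))\<^sup>2)
      = (\<Sum>i<?a*?b. \<Sum>j<?c*?d. (X $$ (i div ?b, j div ?d))\<^sup>2 * (Y $$ (i mod ?b, j mod ?d))\<^sup>2)"
    by (intro sum.cong refl) (simp add: kron_def power_mult_distrib)
  also have "\<dots> = (\<Sum>i<?a*?b. \<Sum>j1<?c. \<Sum>j2<?d. (X $$ (i div ?b, j1))\<^sup>2 * (Y $$ (i mod ?b, j2))\<^sup>2)"
  proof (rule sum.cong[OF refl])
    fix i show "(\<Sum>j<?c*?d. (X $$ (i div ?b, j div ?d))\<^sup>2 * (Y $$ (i mod ?b, j mod ?d))\<^sup>2)
      = (\<Sum>j1<?c. \<Sum>j2<?d. (X $$ (i div ?b, j1))\<^sup>2 * (Y $$ (i mod ?b, j2))\<^sup>2)"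
      by (rule sum_divmod[where g="\<lambda>j1 j2. (X $$ (i div ?b, j1))\<^sup>2 * (Y $$ (i mod ?b, j2))\<^sup>2"])
  qed
  also have "\<dots> = (\<Sum>i1<?a. \<Sum>i2<?b. \<Sum>j1<?c. \<Sum>j2<?d. (X $$ (i1, j1))\<^sup>2 * (Y $$ (i2, j2))\<^sup>2)"
    by (rule sum_divmod[where g="\<lambda>i1 i2. \<Sum>j1<?c. \<Sum>j2<?d. (X $$ (i1, j1))\<^sup>2 * (Y $$ (i2, j2))\<^sup>2"])
  also have "\<dots> = (\<Sum>i1<?a. \<Sum>j1<?c. (X $$ (i1, j1))\<^sup>2) * (\<Sum>i2<?b. \<Sum>j2<?d. (Y $$ (i2, j2))\<^sup>2)"
  proof -
    have "(\<Sum>i1<?a. \<Sum>i2<?b. \<Sum>j1<?c. \<Sum>j2<?d. (X $$ (i1, j1))\<^sup>2 * (Y $$ (i2, j2))\<^sup>2)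
       = (\<Sum>i1<?a. \<Sum>j1<?c. \<Sum>i2<?b. \<Sum>j2<?d. (X $$ (i1, j1))\<^sup>2 * (Y $$ (i2, j2))\<^sup>2)"
      by (rule sum.cong[OF refl], rule sum.swap)
    also have "\<dots> = (\<Sum>i1<?a. \<Sum>j1<?c. (X $$ (i1, j1))\<^sup>2 * (\<Sum>i2<?b. \<Sum>j2<?d. (Y $$ (i2, j2))\<^sup>2))"
      by (simp add: sum_distrib_left)
    also have "\<dots> = (\<Sum>i1<?a. \<Sum>j1<?c. (X $$ (i1, j1))\<^sup>2) * (\<Sum>i2<?b. \<Sum>j2<?d. (Y $$ (i2, j2))\<^sup>2)"
      by (simp add: sum_distrib_right)
    finally show ?thesis .
  qed
  finally show ?thesis
    unfolding frob_def by (simp add: real_sqrt_mult)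
qed

lemma frob_L2: "frob X = L2_set (\<lambda>(i,j). X $$ (i,j)) ({..<dim_row X} \<times> {..<dim_col X})"
  unfolding frob_def L2_set_def by (simp add: sum.cartesian_product case_prod_beta)

lemma frob_add: assumes "X \<in> carrier_mat a b" "Y \<in> carrier_mat a b"
  shows "frob (X + Y) \<le> frob X + frob Y"
proof -
  have "frob (X + Y) = L2_set (\<lambda>x. (\<lambda>(i,j). X $$ (i,j)) x + (\<lambda>(i,j). Y $$ (i,j)) x) ({..<a} \<times> {..<b})"
    unfolding frob_L2 using assms by (intro L2_set_cong) auto
  also have "\<dots> \<le> frob X + frob Y"
    unfolding frob_L2 using assms by (intro order.trans[OF L2_set_triangle_ineq]) auto
  finally show ?thesis .
qed

lemma L2_sum_le: fixes K :: nat shows "L2_set (\<lambda>x. \<Sum>k<K. g k x) A \<le> (\<Sum>k<K. L2_set (g k) A)"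
proof (induction K)
  case 0 then show ?case by (simp add: L2_set_def)
next
  case (Suc K)
  have "L2_set (\<lambda>x. \<Sum>k<Suc K. g k x) A = L2_set (\<lambda>x. (\<Sum>k<K. g k x) + g K x) A" by simp
  also have "\<dots> \<le> L2_set (\<lambda>x. \<Sum>k<K. g k x) A + L2_set (g K) A" by (rule L2_set_triangle_ineq)
  also have "\<dots> \<le> (\<Sum>k<Suc K. L2_set (g k) A)" using Suc by simp
  finally show ?case .
qed

lemma frob_msum: assumes "\<And>k. k < K \<Longrightarrow> f k \<in> carrier_mat a b"
  shows "frob (msum a b f K) \<le> (\<Sum>k<K. frob (f k))"
proof -
  have "frob (msum a b f K) = L2_set (\<lambda>x. \<Sum>k<K. (\<lambda>(i,j). f k $$ (i,j)) x) ({..<a} \<times> {..<b})"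
    unfolding frob_L2 by (intro L2_set_cong) (auto simp: msum_def)
  also have "\<dots> \<le> (\<Sum>k<K. L2_set (\<lambda>(i,j). f k $$ (i,j)) ({..<a} \<times> {..<b}))" by (rule L2_sum_le)
  also have "\<dots> = (\<Sum>k<K. frob (f k))"
    unfolding frob_L2 using assms by (intro sum.cong refl) auto
  finally show ?thesis .
qed

lemma msum_diff: fixes f g :: "nat \<Rightarrow> real mat" assumes "\<And>k. k < K \<Longrightarrow> f k \<in> carrier_mat a b" "\<And>k. k < K \<Longrightarrow> g k \<in> carrier_mat a b"
  shows "msum a b f K - msum a b g K = msum a b (\<lambda>k. f k - g k) K"
proof (rule eq_matI)
  fix i j assume "i < dim_row (msum a b (\<lambda>k. f k - g k) K)" "j < dim_col (msum a b (\<lambda>k. f k - g k) K)"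
  then have ij: "i < a" "j < b" by (auto simp: msum_def)
  have "(\<Sum>k<K. f k $$ (i, j)) - (\<Sum>k<K. g k $$ (i, j)) = (\<Sum>k<K. f k $$ (i, j) - g k $$ (i, j))"
    by (simp add: sum_subtractf)
  also have "\<dots> = (\<Sum>k<K. (f k - g k) $$ (i, j))"
  proof (rule sum.cong[OF refl])
    fix k assume "k \<in> {..<K}"
    then have "f k \<in> carrier_mat a b" "g k \<in> carrier_mat a b" using assms by auto
    then show "f k $$ (i, j) - g k $$ (i, j) = (f k - g k) $$ (i, j)" using ij by auto
  qed
  finally show "(msum a b f K - msum a b g K) $$ (i, j) = msum a b (\<lambda>k. f k - g k) K $$ (i, j)"
    using ij by (simp add: msum_def)
qed (auto simp: msum_def)

lemma kron_diff: fixes KA KB X Y :: "real mat" assumes "KA \<in> carrier_mat a b" "KB \<in> carrier_mat a b" "X \<in> carrier_mat c d" "Y \<in> carrier_mat c d"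
  shows "kron KA X - kron KB Y = kron (KA - KB) X + kron KB (X - Y)"
proof (rule eq_matI)
  fix i j assume ij: "i < dim_row (kron (KA - KB) X + kron KB (X - Y))" "j < dim_col (kron (KA - KB) X + kron KB (X - Y))"
  then have i: "i < a * c" and j: "j < b * d" using assms by auto
  have c: "c > 0" using i by (cases c) auto
  have d: "d > 0" using j by (cases d) auto
  have "i div c < a" using i by (simp add: less_mult_imp_div_less)
  moreover have "j div d < b" using j by (simp add: less_mult_imp_div_less)
  moreover have "i mod c < c" "j mod d < d" using c d by auto
  ultimately show "(kron KA X - kron KB Y) $$ (i, j) = (kron (KA - KB) X + kron KB (X - Y)) $$ (i, j)"
    using assms i j by (simp add: kron_def algebra_simps)
qed (use assms in auto)

lemma kronN_carrier: "(\<And>j. j < n \<Longrightarrow> f j \<in> carrier_mat (m j) (p j)) \<Longrightarrow>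
   kronN f n \<in> carrier_mat (\<Prod>j<n. m j) (\<Prod>j<n. p j)"
proof (induction n)
  case 0 then show ?case by simp
next
  case (Suc n)
  then have "kronN f n \<in> carrier_mat (\<Prod>j<n. m j) (\<Prod>j<n. p j)" by simp
  moreover have "f n \<in> carrier_mat (m n) (p n)" using Suc.prems by simp
  ultimately show ?case unfolding carrier_mat_def by simp
qed

lemma frob_one: "frob (1\<^sub>m 1) = 1"
  unfolding frob_def by simp

lemma frob_kronN: "(\<And>j. j < n \<Longrightarrow> frob (f j) = \<alpha>) \<Longrightarrow> frob (kronN f n) = \<alpha> ^ n"
proof (induction n)
  case 0 then show ?case by (simp add: frob_def)
next
  case (Suc n)
  then show ?case by (simp add: frob_kron)
qed

lemma tele:
  fixes A B :: "nat \<Rightarrow> real mat" and \<alpha> :: real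
  assumes a: "\<alpha> > 0"
    and cA: "\<And>j. j < n \<Longrightarrow> A j \<in> carrier_mat (m j) (p j)"
    and cB: "\<And>j. j < n \<Longrightarrow> B j \<in> carrier_mat (m j) (p j)"
    and fA: "\<And>j. j < n \<Longrightarrow> frob (A j) = \<alpha>"
    and fB: "\<And>j. j < n \<Longrightarrow> frob (B j) = \<alpha>"
  shows "\<alpha> * frob (kronN A n - kronN B n) \<le> \<alpha> ^ n * (\<Sum>j<n. frob (A j - B j))"
  using assms
proof (induction n)
  case 0
  then show ?case by (simp add: frob_def)
next
  case (Suc n)
  define KA where "KA = kronN A n"
  define KB where "KB = kronN B n"
  have IH: "\<alpha> * frob (KA - KB) \<le> \<alpha> ^ n * (\<Sum>j<n. frob (A j - B j))"
    unfolding KA_def KB_def using Suc by simp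
  have cKA: "KA \<in> carrier_mat (\<Prod>j<n. m j) (\<Prod>j<n. p j)" unfolding KA_def
    by (rule kronN_carrier) (use Suc.prems in simp)
  have cKB: "KB \<in> carrier_mat (\<Prod>j<n. m j) (\<Prod>j<n. p j)" unfolding KB_def
    by (rule kronN_carrier) (use Suc.prems in simp)
  have fKB: "frob KB = \<alpha> ^ n" unfolding KB_def
    by (rule frob_kronN) (use Suc.prems in simp)
  have cAn: "A n \<in> carrier_mat (m n) (p n)" and cBn: "B n \<in> carrier_mat (m n) (p n)"
    and fAn: "frob (A n) = \<alpha>" using Suc.prems by auto
  have eq: "kronN A (Suc n) - kronN B (Suc n) = kron (KA - KB) (A n) + kron KB (A n - B n)"
    unfolding KA_def KB_def using kron_diff[OF cKA[unfolded KA_def] cKB[unfolded KB_def] cAn cBn] by simp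
  have c1: "kron (KA - KB) (A n) \<in> carrier_mat ((\<Prod>j<n. m j) * m n) ((\<Prod>j<n. p j) * p n)"
    using cKA cKB cAn unfolding carrier_mat_def by simp
  have c2: "kron KB (A n - B n) \<in> carrier_mat ((\<Prod>j<n. m j) * m n) ((\<Prod>j<n. p j) * p n)"
    using cKB cAn cBn unfolding carrier_mat_def by simp
  have "frob (kronN A (Suc n) - kronN B (Suc n)) \<le> frob (KA - KB) * \<alpha> + \<alpha> ^ n * frob (A n - B n)"
    unfolding eq using frob_add[OF c1 c2] by (simp add: frob_kron fAn fKB)
  then have "\<alpha> * frob (kronN A (Suc n) - kronN B (Suc n)) \<le> \<alpha> * (frob (KA - KB) * \<alpha> + \<alpha> ^ n * frob (A n - B n))"
    using Suc.prems(1) by (simp add: mult_left_mono)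
  also have "\<dots> = \<alpha> * (\<alpha> * frob (KA - KB)) + \<alpha> ^ Suc n * frob (A n - B n)"
    by (simp add: algebra_simps)
  also have "\<dots> \<le> \<alpha> * (\<alpha> ^ n * (\<Sum>j<n. frob (A j - B j))) + \<alpha> ^ Suc n * frob (A n - B n)"
    using IH Suc.prems(1) by (simp add: mult_left_mono)
  also have "\<dots> = \<alpha> ^ Suc n * (\<Sum>j<Suc n. frob (A j - B j))"
    by (simp add: algebra_simps)
  finally show ?case .
qed

lemma frob_nonneg: "frob X \<ge> 0"
  by (simp add: frob_def sum_nonneg)

lemma sum_le_sqrt_card: fixes f :: "nat \<Rightarrow> real"
  assumes "\<And>i. i < n \<Longrightarrow> f i \<ge> 0"
  shows "(\<Sum>i<n. f i) \<le> sqrt (real n) * sqrt (\<Sum>i<n. (f i)\<^sup>2)"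
proof -
  have "(\<Sum>i<n. f i) = (\<Sum>i<n. \<bar>f i\<bar> * \<bar>1\<bar>)" using assms by (intro sum.cong) auto
  also have "\<dots> \<le> L2_set f {..<n} * L2_set (\<lambda>_. 1) {..<n}" by (rule L2_set_mult_ineq)
  also have "\<dots> = sqrt (real n) * sqrt (\<Sum>i<n. (f i)\<^sup>2)"
    by (simp add: L2_set_constant L2_set_def)
  finally show ?thesis .
qed

theorem lemma8:
  fixes A B :: "nat \<Rightarrow> nat \<Rightarrow> real mat" and m p :: "nat \<Rightarrow> nat"
    and \<alpha> \<epsilon> :: real and N r :: nat
  assumes "\<alpha> > 0" and "N \<ge> 1" and "r \<ge> 1"
    and "\<And>k n. k < r \<Longrightarrow> n < N \<Longrightarrow> A k n \<in> carrier_mat (m n) (p n)"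
    and "\<And>k n. k < r \<Longrightarrow> n < N \<Longrightarrow> B k n \<in> carrier_mat (m n) (p n)"
    and "\<And>k n. k < r \<Longrightarrow> n < N \<Longrightarrow> frob (A k n) = \<alpha>"
    and "\<And>k n. k < r \<Longrightarrow> n < N \<Longrightarrow> frob (B k n) = \<alpha>"
    and "sqrt (\<Sum>k<r. \<Sum>n<N. (frob (A k n - B k n))\<^sup>2) \<le> \<epsilon>"
  shows "frob (msum (\<Prod>n<N. m n) (\<Prod>n<N. p n) (\<lambda>k. kronN (A k) N) r
              - msum (\<Prod>n<N. m n) (\<Prod>n<N. p n) (\<lambda>k. kronN (B k) N) r)
         \<le> \<alpha> ^ (N - 1) * sqrt (real (N * r)) * \<epsilon>"
proof -
  note a = assms(1) and cA = assms(4) and cB = assms(5) and fA = assms(6) and fB = assms(7)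
  define P where "P = (\<Prod>n<N. m n)"
  define Q where "Q = (\<Prod>n<N. p n)"
  define d where "d k n = frob (A k n - B k n)" for k n
  define s where "s k = sqrt (\<Sum>n<N. (d k n)\<^sup>2)" for k
  have cKA: "kronN (A k) N \<in> carrier_mat P Q" if "k < r" for k
    unfolding P_def Q_def by (rule kronN_carrier) (use cA that in auto)
  have cKB: "kronN (B k) N \<in> carrier_mat P Q" if "k < r" for k
    unfolding P_def Q_def by (rule kronN_carrier) (use cB that in auto)
  have eqd: "msum P Q (\<lambda>k. kronN (A k) N) r - msum P Q (\<lambda>k. kronN (B k) N) r
      = msum P Q (\<lambda>k. kronN (A k) N - kronN (B k) N) r"
    by (rule msum_diff) (use cKA cKB in auto)
  have fm: "frob (msum P Q (\<lambda>k. kronN (A k) N - kronN (B k) N) r)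
      \<le> (\<Sum>k<r. frob (kronN (A k) N - kronN (B k) N))"
    by (rule frob_msum) (use cKA cKB in \<open>auto intro!: minus_carrier_mat\<close>)
  have bnd: "frob (kronN (A k) N - kronN (B k) N) \<le> \<alpha> ^ (N - 1) * (sqrt (real N) * s k)" if k: "k < r" for k
  proof -
    have "\<alpha> * frob (kronN (A k) N - kronN (B k) N) \<le> \<alpha> ^ N * (\<Sum>j<N. d k j)"
      unfolding d_def by (rule tele[where m=m and p=p, OF a]) (use cA cB fA fB k in auto)
    also have "\<dots> = \<alpha> * (\<alpha> ^ (N - 1) * (\<Sum>j<N. d k j))"
      using assms(2) by (cases N) auto
    finally have "frob (kronN (A k) N - kronN (B k) N) \<le> \<alpha> ^ (N - 1) * (\<Sum>j<N. d k j)"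
      using a by simp
    also have "\<dots> \<le> \<alpha> ^ (N - 1) * (sqrt (real N) * s k)"
      unfolding s_def using a
      by (intro mult_left_mono sum_le_sqrt_card) (auto simp: d_def frob_nonneg)
    finally show ?thesis .
  qed
  have sm: "(\<Sum>k<r. frob (kronN (A k) N - kronN (B k) N)) \<le> (\<Sum>k<r. \<alpha> ^ (N - 1) * (sqrt (real N) * s k))"
    by (rule sum_mono) (use bnd in simp)
  have "frob (msum P Q (\<lambda>k. kronN (A k) N) r - msum P Q (\<lambda>k. kronN (B k) N) r)
      \<le> (\<Sum>k<r. \<alpha> ^ (N - 1) * (sqrt (real N) * s k))"
    unfolding eqd using fm sm by (rule order.trans)
  also have "\<dots> = \<alpha> ^ (N - 1) * sqrt (real N) * (\<Sum>k<r. s k)"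
    by (simp add: sum_distrib_left mult.assoc)
  also have "\<dots> \<le> \<alpha> ^ (N - 1) * sqrt (real N) * (sqrt (real r) * \<epsilon>)"
  proof (rule mult_left_mono)
    have "(\<Sum>k<r. s k) \<le> sqrt (real r) * sqrt (\<Sum>k<r. (s k)\<^sup>2)"
      by (rule sum_le_sqrt_card) (simp add: s_def sum_nonneg)
    also have "(\<Sum>k<r. (s k)\<^sup>2) = (\<Sum>k<r. \<Sum>n<N. (frob (A k n - B k n))\<^sup>2)"
      unfolding s_def d_def by (intro sum.cong refl) (simp add: sum_nonneg)
    finally have "(\<Sum>k<r. s k) \<le> sqrt (real r) * sqrt (\<Sum>k<r. \<Sum>n<N. (frob (A k n - B k n))\<^sup>2)" .
    also have "\<dots> \<le> sqrt (real r) * \<epsilon>"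
      by (rule mult_left_mono[OF assms(8)]) simp
    finally show "(\<Sum>k<r. s k) \<le> sqrt (real r) * \<epsilon>" .
  qed (use a in simp)
  also have "\<dots> = \<alpha> ^ (N - 1) * sqrt (real (N * r)) * \<epsilon>"
    by (simp add: real_sqrt_mult)
  finally show ?thesis unfolding P_def Q_def .
qed

end
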